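(* Let $Y$ be a geodesic space, $D\subseteq Y$, $S$ a semigroup of nonexpansive maps $D\to D$ endowed with the Borel $\sigma$-algebra of the compact-open topology, $(X,\mu)$ a probability space, $T:X\to X$ an ergodic measure-preserving transformation, $w:X\to S$ measurable, and $a_n(x)=w(x)w(Tx)\cdots w(T^{n-1}x)$ ($a_0$ the identity). Fix $y\in D$ with $\int_X d(y,a_1(x)y)\,d\mu(x)<\infty$ and let $A=\lim_{n\to\infty}\frac1n\int_X d(y,a_n(x)y)\,d\mu(x)$. Write $D_n(x)=d(y,a_n(x)y)$ and $D_n(x,k)=d(y,a_{n-k}(T^kx)y)$ for $0\le k\le n$. Let $E$ be the set of $x\in X$ such that for every $\varepsilon>0$ there exist $M\in\mathbb{N}$ and infinitely many $n\in\mathbb{N}$ with $D_n(x)-D_n(x,k)\ge(A-\varepsilon)k$ for all integers $k\in[M,n]$. Let $x\in E$ with $\lim_{n\to\infty}D_n(x)/n=A>0$. Then for all sequences $(\alpha_i)\subseteq(0,1]$ and $(p_i)\subseteq\mathbb{N}$ there exist sequences $(K_i),(n_i)\subseteq\mathbb{N}$ such that for all $i\ge1$: (i) $p_i\le K_i$, $n_i\in(K_{i+1},n_{i+1})$, and $D_{n_{i+1}}(x)\ge\max\{D_{n_i}(x),An_i\}$; (ii) for all integers $k\in[K_i,n_i]$, $|D_k(x)-Ak|\le Ak/2^i$ and \[(1-\min\{1/2^i,\alpha_i\})D_k(x)+d(a_k(x)y,a_{n_i}(x)y)\le D_{n_i}(x).\]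
   Context: A geodesic space is a metric space in which any two points are joined by a distance-preserving path from a real interval. A map is nonexpansive if it is $1$-Lipschitz. *)

theory Defs
  imports "HOL-Probability.Probability"
begin

definition geodesic_space :: "'a::metric_space itself \<Rightarrow> bool" where
  "geodesic_space _ \<longleftrightarrow>
     (\<forall>p q::'a. \<exists>\<gamma>::real \<Rightarrow> 'a. \<gamma> 0 = p \<and> \<gamma> (dist p q) = q \<and>
        (\<forall>s\<in>{0..dist p q}. \<forall>t\<in>{0..dist p q}. dist (\<gamma> s) (\<gamma> t) = \<bar>s - t\<bar>))"

definition nonexpansive_on :: "'a::metric_space set \<Rightarrow> ('a \<Rightarrow> 'a) \<Rightarrow> bool" where
  "nonexpansive_on D f \<longleftrightarrow> f ` D \<subseteq> D \<and> (\<forall>u\<in>D. \<forall>v\<in>D. dist (f u) (f v) \<le> dist u v)"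

definition nonexp_semigroup :: "'a::metric_space set \<Rightarrow> ('a \<Rightarrow> 'a) set \<Rightarrow> bool" where
  "nonexp_semigroup D S \<longleftrightarrow> (\<forall>f\<in>S. nonexpansive_on D f) \<and> (\<forall>f\<in>S. \<forall>g\<in>S. f \<circ> g \<in> S)"

definition compact_open_topology :: "'a::metric_space set \<Rightarrow> ('a \<Rightarrow> 'a) set \<Rightarrow> ('a \<Rightarrow> 'a) topology" where
  "compact_open_topology D S = topology_generated_by
     {{f\<in>S. f ` K \<subseteq> U} | K U. compact K \<and> K \<subseteq> D \<and> openin (top_of_set D) U}"

definition borel_measure_of :: "'b topology \<Rightarrow> 'b measure" where
  "borel_measure_of X = sigma (topspace X) {U. openin X U}"

definition measure_preserving_map :: "'x measure \<Rightarrow> ('x \<Rightarrow> 'x) \<Rightarrow> bool" where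
  "measure_preserving_map M T \<longleftrightarrow> T \<in> measurable M M \<and>
     (\<forall>A\<in>sets M. emeasure M (T -` A \<inter> space M) = emeasure M A)"

definition ergodic_map :: "'x measure \<Rightarrow> ('x \<Rightarrow> 'x) \<Rightarrow> bool" where
  "ergodic_map M T \<longleftrightarrow> measure_preserving_map M T \<and>
     (\<forall>A\<in>sets M. T -` A \<inter> space M = A \<longrightarrow> measure M A = 0 \<or> measure M A = 1)"

primrec cocycle :: "('x \<Rightarrow> 'a \<Rightarrow> 'a) \<Rightarrow> ('x \<Rightarrow> 'x) \<Rightarrow> nat \<Rightarrow> 'x \<Rightarrow> 'a \<Rightarrow> 'a" where
  "cocycle w T 0 x = id"
| "cocycle w T (Suc n) x = cocycle w T n x \<circ> w ((T ^^ n) x)"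

end

theory Submission
  imports Defs
begin

lemma cocycle_add:
  "cocycle w T (k+m) x = cocycle w T k x \<circ> cocycle w T m ((T ^^ k) x)"
proof (induction m)
  case 0 then show ?case by simp
next
  case (Suc m)
  have "(T ^^ (k+m)) x = (T ^^ m) ((T ^^ k) x)" by (metis add.commute comp_apply funpow_add)
  then show ?case using Suc by (simp add: o_assoc)
qed

lemma nonexp_comp:
  "nonexpansive_on D f \<Longrightarrow> nonexpansive_on D g \<Longrightarrow> nonexpansive_on D (f \<circ> g)"
  unfolding nonexpansive_on_def
proof (intro conjI ballI)
  assume f: "f ` D \<subseteq> D \<and> (\<forall>u\<in>D. \<forall>v\<in>D. dist (f u) (f v) \<le> dist u v)"
    and g: "g ` D \<subseteq> D \<and> (\<forall>u\<in>D. \<forall>v\<in>D. dist (g u) (g v) \<le> dist u v)"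
  show "(f \<circ> g) ` D \<subseteq> D" using f g by (auto simp: image_subset_iff)
  fix u v assume u: "u \<in> D" and v: "v \<in> D"
  have "g u \<in> D" "g v \<in> D" using g u v by auto
  then have "dist (f (g u)) (f (g v)) \<le> dist (g u) (g v)" using f by blast
  also have "\<dots> \<le> dist u v" using g u v by blast
  finally show "dist ((f \<circ> g) u) ((f \<circ> g) v) \<le> dist u v" by simp
qed

lemma cocycle_nonexp:
  assumes "\<forall>j. nonexpansive_on D (w ((T ^^ j) x))"
  shows "nonexpansive_on D (cocycle w T k x)"
proof (induction k)
  case 0 then show ?case by (simp add: nonexpansive_on_def)
next
  case (Suc k) then show ?case using assms nonexp_comp[of D "cocycle w T k x" "w ((T ^^ k) x)"] by (simp only: cocycle.simps)
qed

lemma abstract: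
  fixes d :: "nat \<Rightarrow> real" and e g :: "nat \<Rightarrow> nat \<Rightarrow> real" and A :: real
  assumes lim: "(\<lambda>n. d n / real n) \<longlonglongrightarrow> A"
    and Apos: "A > 0"
    and E: "\<forall>\<epsilon>>0. \<exists>m::nat. \<exists>\<^sub>\<infinity>n::nat. \<forall>k::nat. m \<le> k \<and> k \<le> n \<longrightarrow> d n - e n k \<ge> (A - \<epsilon>) * real k"
    and ge: "\<And>k n. k \<le> n \<Longrightarrow> g k n \<le> e n k"
  shows "\<forall>(\<alpha>::nat \<Rightarrow> real) (p::nat \<Rightarrow> nat). (\<forall>i\<ge>1. 0 < \<alpha> i \<and> \<alpha> i \<le> 1) \<longrightarrow>
    (\<exists>K n :: nat \<Rightarrow> nat. \<forall>i\<ge>1.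
       p i \<le> K i \<and> K (Suc i) < n i \<and> n i < n (Suc i) \<and>
       d (n (Suc i)) \<ge> max (d (n i)) (A * real (n i)) \<and>
       (\<forall>k::nat. K i \<le> k \<and> k \<le> n i \<longrightarrow>
          \<bar>d k - A * real k\<bar> \<le> A * real k / 2 ^ i \<and>
          (1 - min (1 / 2 ^ i) (\<alpha> i)) * d k + g k (n i) \<le> d (n i)))"
proof (intro allI impI)
  fix \<alpha> :: "nat \<Rightarrow> real" and p :: "nat \<Rightarrow> nat"
  assume \<alpha>: "\<forall>i\<ge>1. 0 < \<alpha> i \<and> \<alpha> i \<le> 1"
  have close: "\<exists>N. \<forall>k\<ge>N. \<bar>d k - A * real k\<bar> \<le> A * \<eta> * real k" if "\<eta> > 0" for \<eta>
  proof -
    have "A * \<eta> > 0" using that Apos by simp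
    with lim have "eventually (\<lambda>k. dist (d k / real k) A < A * \<eta>) sequentially"
      by (rule tendstoD)
    then obtain N where N: "\<forall>k\<ge>N. dist (d k / real k) A < A * \<eta>"
      by (auto simp: eventually_sequentially)
    show ?thesis
    proof (intro exI allI impI)
      fix k assume k: "max N 1 \<le> k"
      then have kp: "real k > 0" by simp
      have "\<bar>d k / real k - A\<bar> < A * \<eta>" using N k by (simp add: dist_real_def)
      then have "\<bar>d k / real k - A\<bar> * real k \<le> A * \<eta> * real k" using kp by simp
      moreover have "\<bar>d k / real k - A\<bar> * real k = \<bar>d k - A * real k\<bar>"
        using kp by (simp add: abs_mult[symmetric] field_simps)
      ultimately show "\<bar>d k - A * real k\<bar> \<le> A * \<eta> * real k" by simp
    qed
  qed
  have big: "\<exists>N. \<forall>k\<ge>N. d k \<ge> c" for c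
  proof -
    obtain N where N: "\<forall>k\<ge>N. \<bar>d k - A * real k\<bar> \<le> A * (1/2) * real k" using close[of "1/2"] by auto
    show ?thesis
    proof (intro exI allI impI)
      fix k assume k: "max N (nat \<lceil>2 * c / A\<rceil>) \<le> k"
      then have "\<bar>d k - A * real k\<bar> \<le> A * (1/2) * real k" using N by simp
      then have "d k \<ge> A * real k / 2" by linarith
      moreover have "real k \<ge> 2 * c / A" using k by linarith
      then have "A * real k \<ge> 2 * c" using Apos by (simp add: field_simps)
      ultimately show "d k \<ge> c" by linarith
    qed
  qed
  define \<delta> where "\<delta> i = min (1 / 2 ^ i) (\<alpha> i)" for i :: nat
  have \<delta>: "0 < \<delta> i \<and> \<delta> i \<le> 1 / 2 ^ i \<and> \<delta> i \<le> 1" if "i \<ge> 1" for i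
    using \<alpha> that by (auto simp: \<delta>_def)
  have "\<forall>i. \<exists>N. i \<ge> 1 \<longrightarrow> (\<forall>k\<ge>N. \<bar>d k - A * real k\<bar> \<le> A * (\<delta> i / 4) * real k)"
  proof
    fix i show "\<exists>N. i \<ge> 1 \<longrightarrow> (\<forall>k\<ge>N. \<bar>d k - A * real k\<bar> \<le> A * (\<delta> i / 4) * real k)"
    proof (cases "i \<ge> 1")
      case True
      then have "\<delta> i / 4 > 0" using \<delta> by simp
      from close[OF this] show ?thesis by blast
    qed simp
  qed
  from choice[OF this] obtain N where N0: "\<forall>i. i \<ge> 1 \<longrightarrow> (\<forall>k\<ge>N i. \<bar>d k - A * real k\<bar> \<le> A * (\<delta> i / 4) * real k)"
    by blast
  have N: "\<bar>d k - A * real k\<bar> \<le> A * (\<delta> i / 4) * real k" if "i \<ge> 1" "k \<ge> N i" for i k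
    using N0 that by blast
  define G where "G M i n \<longleftrightarrow> (\<forall>k::nat. M i \<le> k \<and> k \<le> n \<longrightarrow> d n - e n k \<ge> (A - A * \<delta> i / 4) * real k)"
    for M :: "nat \<Rightarrow> nat" and i n
  have "\<forall>i. \<exists>m. i \<ge> 1 \<longrightarrow> (\<exists>\<^sub>\<infinity>n::nat. \<forall>k::nat. m \<le> k \<and> k \<le> n \<longrightarrow> d n - e n k \<ge> (A - A * \<delta> i / 4) * real k)"
  proof
    fix i show "\<exists>m. i \<ge> 1 \<longrightarrow> (\<exists>\<^sub>\<infinity>n::nat. \<forall>k::nat. m \<le> k \<and> k \<le> n \<longrightarrow> d n - e n k \<ge> (A - A * \<delta> i / 4) * real k)"
    proof (cases "i \<ge> 1")
      case True
      then have "A * \<delta> i / 4 > 0" using \<delta> Apos by simp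
      then show ?thesis using E by blast
    qed simp
  qed
  from choice[OF this] obtain M where M0: "\<forall>i. i \<ge> 1 \<longrightarrow> (\<exists>\<^sub>\<infinity>n::nat. \<forall>k::nat. M i \<le> k \<and> k \<le> n \<longrightarrow> d n - e n k \<ge> (A - A * \<delta> i / 4) * real k)"
    by blast
  have M: "\<exists>\<^sub>\<infinity>n::nat. G M i n" if "i \<ge> 1" for i
    using M0 that unfolding G_def by blast
  have chex: "\<exists>m. m > b \<and> G M i m \<and> d m \<ge> c" if i: "i \<ge> 1" for i b c
  proof -
    obtain Nc where Nc: "\<forall>k\<ge>Nc. d k \<ge> c" using big by blast
    from M[OF i] obtain m where "m > max b Nc" "G M i m" unfolding INFM_nat by blast
    then show ?thesis using Nc by auto
  qed
  define ch where "ch i b c = (SOME m. m > b \<and> G M i m \<and> d m \<ge> c)" for i b c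
  have ch: "ch i b c > b \<and> G M i (ch i b c) \<and> d (ch i b c) \<ge> c" if "i \<ge> 1" for i b c
    unfolding ch_def by (rule someI_ex[OF chex[OF that]])
  define K where "K i = max (p i) (max (N i) (M i))" for i
  define n where "n = rec_nat 0 (\<lambda>i prev. ch (Suc i) (max (K (Suc (Suc i))) prev) (max (d prev) (A * real prev)))"
  have nS: "n (Suc i) = ch (Suc i) (max (K (Suc (Suc i))) (n i)) (max (d (n i)) (A * real (n i)))" for i
    by (simp add: n_def)
  have nprop: "n (Suc i) > K (Suc (Suc i)) \<and> n (Suc i) > n i \<and> G M (Suc i) (n (Suc i)) \<and>
      d (n (Suc i)) \<ge> max (d (n i)) (A * real (n i))" for i
    using ch[of "Suc i" "max (K (Suc (Suc i))) (n i)" "max (d (n i)) (A * real (n i))"] nS[of i] by simp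
  show "\<exists>K n :: nat \<Rightarrow> nat. \<forall>i\<ge>1.
       p i \<le> K i \<and> K (Suc i) < n i \<and> n i < n (Suc i) \<and>
       d (n (Suc i)) \<ge> max (d (n i)) (A * real (n i)) \<and>
       (\<forall>k::nat. K i \<le> k \<and> k \<le> n i \<longrightarrow>
          \<bar>d k - A * real k\<bar> \<le> A * real k / 2 ^ i \<and>
          (1 - min (1 / 2 ^ i) (\<alpha> i)) * d k + g k (n i) \<le> d (n i))"
  proof (intro exI allI impI conjI)
    fix i :: nat assume i: "i \<ge> 1"
    then obtain j where j: "i = Suc j" by (cases i) auto
    show "p i \<le> K i" by (simp add: K_def)
    show "K (Suc i) < n i" using nprop[of j] j by simp
    show "n i < n (Suc i)" using nprop[of i] by simp
    show "d (n (Suc i)) \<ge> max (d (n i)) (A * real (n i))" using nprop[of i] by simp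
    have Gi: "G M i (n i)" using nprop[of j] j by simp
    fix k assume k: "K i \<le> k \<and> k \<le> n i"
    have dk: "\<bar>d k - A * real k\<bar> \<le> A * (\<delta> i / 4) * real k" using N[OF i] k by (simp add: K_def)
    have Ak: "A * real k \<ge> 0" using Apos by simp
    have "A * (\<delta> i / 4) * real k \<le> A * real k / 2 ^ i"
    proof -
      have "\<delta> i / 4 \<le> 1 / 2 ^ i" using \<delta>[OF i] by simp
      then have "(A * real k) * (\<delta> i / 4) \<le> (A * real k) * (1 / 2 ^ i)"
        using Ak by (rule mult_left_mono)
      then show ?thesis by (simp add: algebra_simps)
    qed
    with dk show "\<bar>d k - A * real k\<bar> \<le> A * real k / 2 ^ i" by linarith
    have ek: "d (n i) - e (n i) k \<ge> (A - A * \<delta> i / 4) * real k"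
      using Gi k unfolding G_def K_def by simp
    have gk: "g k (n i) \<le> e (n i) k" using ge k by simp
    let ?t = "A * real k" and ?d = "\<delta> i"
    have d01: "0 < ?d" "?d \<le> 1" using \<delta>[OF i] by auto
    have "(1 - ?d) * d k \<le> (1 - ?d) * (?t + ?d / 4 * ?t)"
    proof (rule mult_left_mono)
      show "d k \<le> ?t + ?d / 4 * ?t" proof -
        have "d k - ?t \<le> A * (?d / 4) * real k" using abs_le_D1[OF dk] .
        moreover have "A * (?d / 4) * real k = ?d / 4 * ?t" by simp
        ultimately show ?thesis by linarith
      qed
    qed (use d01 in simp)
    also have "\<dots> = ?t * (1 - 3 * ?d / 4 - ?d * ?d / 4)" by (simp add: field_simps)
    also have "\<dots> \<le> ?t * (1 - ?d / 4)"
      using Ak d01 by (intro mult_left_mono) (auto simp: algebra_simps)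
    finally have "(1 - ?d) * d k \<le> ?t * (1 - ?d / 4)" .
    then show "(1 - min (1 / 2 ^ i) (\<alpha> i)) * d k + g k (n i) \<le> d (n i)"
      using ek gk unfolding \<delta>_def by (simp add: algebra_simps)
  qed
qed

theorem lemma3p1:
  fixes D :: "'a::metric_space set" and S :: "('a \<Rightarrow> 'a) set"
    and M :: "'x measure" and T :: "'x \<Rightarrow> 'x" and w :: "'x \<Rightarrow> 'a \<Rightarrow> 'a"
    and y :: 'a and A :: real and x :: 'x
  assumes geo: "geodesic_space TYPE('a)"
    and S: "nonexp_semigroup D S"
    and P: "prob_space M"
    and erg: "ergodic_map M T"
    and wS: "\<forall>z\<in>space M. w z \<in> S"
    and wmeas: "w \<in> measurable M (borel_measure_of (compact_open_topology D S))"
    and yD: "y \<in> D"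
    and int1: "(\<integral>\<^sup>+ z. ennreal (dist y (cocycle w T 1 z y)) \<partial>M) < \<infinity>"
    and Adef: "(\<lambda>n. (\<integral>\<^sup>+ z. ennreal (dist y (cocycle w T n z y)) \<partial>M) / of_nat n)
                 \<longlonglongrightarrow> ennreal A"
    and xM: "x \<in> space M"
    and xE: "\<forall>\<epsilon>>0. \<exists>m::nat. \<exists>\<^sub>\<infinity>n::nat. \<forall>k::nat. m \<le> k \<and> k \<le> n \<longrightarrow>
               dist y (cocycle w T n x y) - dist y (cocycle w T (n - k) ((T ^^ k) x) y)
                 \<ge> (A - \<epsilon>) * real k"
    and lim: "(\<lambda>n. dist y (cocycle w T n x y) / real n) \<longlonglongrightarrow> A"
    and Apos: "A > 0"
  shows "\<forall>(\<alpha>::nat \<Rightarrow> real) (p::nat \<Rightarrow> nat). (\<forall>i\<ge>1. 0 < \<alpha> i \<and> \<alpha> i \<le> 1) \<longrightarrow>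
    (\<exists>K n :: nat \<Rightarrow> nat. \<forall>i\<ge>1.
       p i \<le> K i \<and> K (Suc i) < n i \<and> n i < n (Suc i) \<and>
       dist y (cocycle w T (n (Suc i)) x y)
         \<ge> max (dist y (cocycle w T (n i) x y)) (A * real (n i)) \<and>
       (\<forall>k::nat. K i \<le> k \<and> k \<le> n i \<longrightarrow>
          \<bar>dist y (cocycle w T k x y) - A * real k\<bar> \<le> A * real k / 2 ^ i \<and>
          (1 - min (1 / 2 ^ i) (\<alpha> i)) * dist y (cocycle w T k x y)
            + dist (cocycle w T k x y) (cocycle w T (n i) x y)
            \<le> dist y (cocycle w T (n i) x y)))"
proof -
  have Tsp: "T z \<in> space M" if "z \<in> space M" for z
    using erg that unfolding ergodic_map_def measure_preserving_map_def by (meson measurable_space)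
  have Tj: "(T ^^ j) z \<in> space M" if "z \<in> space M" for j z
    using that by (induction j) (auto intro: Tsp)
  have wne: "nonexpansive_on D (w z)" if "z \<in> space M" for z
    using S wS that unfolding nonexp_semigroup_def by blast
  have cne: "nonexpansive_on D (cocycle w T k z)" if "z \<in> space M" for k z
    by (rule cocycle_nonexp) (use wne Tj that in blast)
  have ge: "dist (cocycle w T k x y) (cocycle w T n x y) \<le> dist y (cocycle w T (n - k) ((T ^^ k) x) y)"
    if "k \<le> n" for k n
  proof -
    have n: "n = k + (n - k)" using that by simp
    have eq: "cocycle w T n x = cocycle w T k x \<circ> cocycle w T (n - k) ((T ^^ k) x)"
      by (subst n, rule cocycle_add)
    have b: "cocycle w T (n - k) ((T ^^ k) x) y \<in> D"
      using cne[OF Tj[OF xM], of "n - k" k] yD unfolding nonexpansive_on_def by blast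
    have "dist (cocycle w T k x y) (cocycle w T k x (cocycle w T (n - k) ((T ^^ k) x) y))
        \<le> dist y (cocycle w T (n - k) ((T ^^ k) x) y)"
      using cne[OF xM, of k] yD b unfolding nonexpansive_on_def by blast
    then show ?thesis using eq by simp
  qed
  show ?thesis
    by (rule abstract[where e = "\<lambda>n k. dist y (cocycle w T (n - k) ((T ^^ k) x) y)", OF lim Apos xE ge])
qed

end
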